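(* Let $(T,\preceq,\Sigma,\mathcal S,\mathcal M)$ be an $(\mathcal S,\mathcal M)$-tree, $n\in\omega$, and $f\in\mathcal{AM}$ with domain $T(\le n)$. Then there exists a unique $f^+\in\mathcal M$ such that $f^+\restriction T(\le n)=f$ and every $\ell\ge\tilde f(n)$ belongs to $\tilde{f^+}[\omega]$.
   Context: A tree is a partially ordered set $(T,\preceq)$ such that for every $a\in T$ the set $\{b\in T:b\prec a\}$ is finite and linearly ordered by $\preceq$. The level of $a$ is $\ell(a)=|\{b\in T:b\prec a\}|$; $T(n)=\{a\in T:\ell(a)=n\}$, and $T(\le n)$, $T(<n)$ are defined analogously. A node $b$ is an immediate successor of $a$ if $a\prec b$ and there is no $c$ with $a\prec c\prec b$. An $\mathcal S$-tree is a quadruple $(T,\preceq,\Sigma,\mathcal S)$ where $(T,\preceq)$ is a countable tree in which every node has finitely many immediate successors and $T(0)$ is finite, $\Sigma$ is a set, and $\mathcal S\colon T\times T^{<\omega}\times\Sigma\to T$ is a partial function such that: (S1) if $\mathcal S(a,\bar p,c)$ is defined then it is an immediate successor of $a$ and every entry of $\bar p$ has level at most $\ell(a)-1$; (S2) if $\mathcal S(a,\bar p,c)=\mathcal S(b,\bar q,d)$ then $a=b$, $\bar p=\bar q$ and $c=d$; (S3) for every $a\in T$ and every immediate successor $b$ of $a$ there are $\bar p\in T^{<\omega}$ and $c\in\Sigma$ with $b=\mathcal S(a,\bar p,c)$. For $S\subseteq T$, a map $f\colon S\to T$ is level-preserving if $\ell(a)=\ell(b)$ implies $\ell(f(a))=\ell(f(b))$;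 then $\tilde f(n)$ denotes $\ell(f(a))$ for any $a\in S$ with $\ell(a)=n$. An injection $F\colon T\to T$ is shape-preserving if (i) it is level-preserving; (ii) whenever $\mathcal S(a,\bar p,c)$ is defined, $\mathcal S(F(a),F(\bar p),c)$ is defined and $\mathcal S(F(a),F(\bar p),c)\preceq F(\mathcal S(a,\bar p,c))$, where $F(\bar p)$ is the tuple of images of the entries of $\bar p$; (iii) for every $a\in T(0)$ and $b\in T$ with $a\preceq b$ we have $a\preceq F(b)$. A shape-preserving $F$ skips level $m$ if $m\notin\tilde F[\omega]$, and skips only level $m$ if $\tilde F[\omega]=\omega\setminus\{m\}$. An $(\mathcal S,\mathcal M)$-tree is a quintuple $(T,\preceq,\Sigma,\mathcal S,\mathcal M)$ where $(T,\preceq,\Sigma,\mathcal S)$ is an $\mathcal S$-tree and $\mathcal M$ is a set of shape-preserving functions $T\to T$ such that: (M1) $\mathrm{Id}_T\in\mathcal M$, $\mathcal M$ is closed under composition, and whenever $(F_i)_{i\in\omega}$ is a sequence in $\mathcal M$ with $F_i\restriction T(\le i)=F_{i+1}\restriction T(\le i)$ for all $i$, there is $F_\infty\in\mathcal M$ with $F_\infty\restriction T(\le i)=F_i\restriction T(\le i)$ for all $i$; (M2) for every $n\in\omega$ and every $F\in\mathcal M$ with $\tilde F(n)>0$ which skips level $\tilde F(n)-1$, there are $F_1,F_2\in\mathcal M$ such that $F_2$ skips only level $\tilde F(n)-1$ and $(F_2\circ F_1)\restriction T(\le n)=F\restriction T(\le n)$; (M3) for all $n<m$ in $\omega$ there is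 $F^n_m\in\mathcal M$ skipping only level $m$ such that $F^n_m(b)=\mathcal S(b,\bar p,c)$ whenever $a\in T(n)$, $b\in T(m)$, $\bar p\in T^{<\omega}$, $c\in\Sigma$, $\mathcal S(a,\bar p,c)$ is defined and $\mathcal S(a,\bar p,c)\preceq b$. Notation: $\mathcal{AM}=\{F\restriction T(<k): F\in\mathcal M,\ k>0\}$. *)

theory Defs
  imports Main "HOL-Library.FuncSet" "HOL-Library.Countable_Set"
begin

definition strict :: "('a \<Rightarrow> 'a \<Rightarrow> bool) \<Rightarrow> 'a \<Rightarrow> 'a \<Rightarrow> bool" where
  "strict le b a \<longleftrightarrow> le b a \<and> b \<noteq> a"

definition is_tree :: "'a set \<Rightarrow> ('a \<Rightarrow> 'a \<Rightarrow> bool) \<Rightarrow> bool" where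
  "is_tree T le \<longleftrightarrow>
     (\<forall>a\<in>T. le a a) \<and>
     (\<forall>a\<in>T. \<forall>b\<in>T. le a b \<and> le b a \<longrightarrow> a = b) \<and>
     (\<forall>a\<in>T. \<forall>b\<in>T. \<forall>c\<in>T. le a b \<and> le b c \<longrightarrow> le a c) \<and>
     (\<forall>a\<in>T. finite {b\<in>T. strict le b a} \<and>
        (\<forall>b\<in>T. \<forall>c\<in>T. strict le b a \<and> strict le c a \<longrightarrow> le b c \<or> le c b))"

definition level :: "'a set \<Rightarrow> ('a \<Rightarrow> 'a \<Rightarrow> bool) \<Rightarrow> 'a \<Rightarrow> nat" where
  "level T le a = card {b\<in>T. strict le b a}"

definition lev :: "'a set \<Rightarrow> ('a \<Rightarrow> 'a \<Rightarrow> bool) \<Rightarrow> nat \<Rightarrow> 'a set" where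
  "lev T le n = {a\<in>T. level T le a = n}"

definition lev_le :: "'a set \<Rightarrow> ('a \<Rightarrow> 'a \<Rightarrow> bool) \<Rightarrow> nat \<Rightarrow> 'a set" where
  "lev_le T le n = {a\<in>T. level T le a \<le> n}"

definition lev_lt :: "'a set \<Rightarrow> ('a \<Rightarrow> 'a \<Rightarrow> bool) \<Rightarrow> nat \<Rightarrow> 'a set" where
  "lev_lt T le n = {a\<in>T. level T le a < n}"

definition imm_succ :: "'a set \<Rightarrow> ('a \<Rightarrow> 'a \<Rightarrow> bool) \<Rightarrow> 'a \<Rightarrow> 'a \<Rightarrow> bool" where
  "imm_succ T le a b \<longleftrightarrow> a \<in> T \<and> b \<in> T \<and> strict le a b \<and>
     \<not> (\<exists>c\<in>T. strict le a c \<and> strict le c b)"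

(* The partial function S : T \<times> T^{<\<omega>} \<times> \<Sigma> \<rightharpoonup> T is 'a \<Rightarrow> 'a list \<Rightarrow> 'c \<Rightarrow> 'a option,
   defined only on arguments from T, lists over T and \<Sigma>. *)
definition S_tree :: "'a set \<Rightarrow> ('a \<Rightarrow> 'a \<Rightarrow> bool) \<Rightarrow> 'c set \<Rightarrow> ('a \<Rightarrow> 'a list \<Rightarrow> 'c \<Rightarrow> 'a option) \<Rightarrow> bool" where
  "S_tree T le Sig S \<longleftrightarrow>
     is_tree T le \<and> countable T \<and>
     (\<forall>a\<in>T. finite {b. imm_succ T le a b}) \<and>
     finite (lev T le 0) \<and>
     (\<forall>a p c b. S a p c = Some b \<longrightarrow> a \<in> T \<and> set p \<subseteq> T \<and> c \<in> Sig) \<and>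
     \<comment> \<open>(S1)\<close>
     (\<forall>a p c b. S a p c = Some b \<longrightarrow> imm_succ T le a b \<and>
        (\<forall>x\<in>set p. int (level T le x) \<le> int (level T le a) - 1)) \<and>
     \<comment> \<open>(S2)\<close>
     (\<forall>a p c b a' q d. S a p c = Some b \<and> S a' q d = Some b \<longrightarrow> a = a' \<and> p = q \<and> c = d) \<and>
     \<comment> \<open>(S3)\<close>
     (\<forall>a\<in>T. \<forall>b. imm_succ T le a b \<longrightarrow> (\<exists>p c. S a p c = Some b))"

definition level_preserving :: "'a set \<Rightarrow> ('a \<Rightarrow> 'a \<Rightarrow> bool) \<Rightarrow> 'a set \<Rightarrow> ('a \<Rightarrow> 'a) \<Rightarrow> bool" where
  "level_preserving T le A f \<longleftrightarrow>
     (\<forall>a\<in>A. \<forall>b\<in>A. level T le a = level T le b \<longrightarrow> level T le (f a) = level T le (f b))"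

(* \<tilde>f(n): the level of f(a) for any a of level n *)
definition ftilde :: "'a set \<Rightarrow> ('a \<Rightarrow> 'a \<Rightarrow> bool) \<Rightarrow> ('a \<Rightarrow> 'a) \<Rightarrow> nat \<Rightarrow> nat" where
  "ftilde T le f n = level T le (f (SOME a. a \<in> T \<and> level T le a = n))"

definition ftilde_range :: "'a set \<Rightarrow> ('a \<Rightarrow> 'a \<Rightarrow> bool) \<Rightarrow> ('a \<Rightarrow> 'a) \<Rightarrow> nat set" where
  "ftilde_range T le F = (\<lambda>a. level T le (F a)) ` T"

definition shape_preserving :: "'a set \<Rightarrow> ('a \<Rightarrow> 'a \<Rightarrow> bool) \<Rightarrow> ('a \<Rightarrow> 'a list \<Rightarrow> 'c \<Rightarrow> 'a option) \<Rightarrow> ('a \<Rightarrow> 'a) \<Rightarrow> bool" where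
  "shape_preserving T le S F \<longleftrightarrow>
     F \<in> T \<rightarrow> T \<and> inj_on F T \<and>
     level_preserving T le T F \<and>
     (\<forall>a p c b. S a p c = Some b \<longrightarrow>
        (\<exists>b'. S (F a) (map F p) c = Some b' \<and> le b' (F b))) \<and>
     (\<forall>a\<in>lev T le 0. \<forall>b\<in>T. le a b \<longrightarrow> le a (F b))"

definition skips :: "'a set \<Rightarrow> ('a \<Rightarrow> 'a \<Rightarrow> bool) \<Rightarrow> ('a \<Rightarrow> 'a) \<Rightarrow> nat \<Rightarrow> bool" where
  "skips T le F m \<longleftrightarrow> m \<notin> ftilde_range T le F"

definition skips_only :: "'a set \<Rightarrow> ('a \<Rightarrow> 'a \<Rightarrow> bool) \<Rightarrow> ('a \<Rightarrow> 'a) \<Rightarrow> nat \<Rightarrow> bool" where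
  "skips_only T le F m \<longleftrightarrow> ftilde_range T le F = UNIV - {m}"

(* (S,M)-tree. Functions T \<rightarrow> T are represented extensionally (undefined outside T),
   so composition is compose T and the identity is restrict id T. *)
definition SM_tree :: "'a set \<Rightarrow> ('a \<Rightarrow> 'a \<Rightarrow> bool) \<Rightarrow> 'c set \<Rightarrow> ('a \<Rightarrow> 'a list \<Rightarrow> 'c \<Rightarrow> 'a option)
    \<Rightarrow> ('a \<Rightarrow> 'a) set \<Rightarrow> bool" where
  "SM_tree T le Sig S M \<longleftrightarrow>
     S_tree T le Sig S \<and>
     M \<subseteq> extensional T \<and>
     (\<forall>F\<in>M. shape_preserving T le S F) \<and>
     \<comment> \<open>(M1)\<close>
     restrict id T \<in> M \<and>
     (\<forall>F\<in>M. \<forall>G\<in>M. compose T F G \<in> M) \<and>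
     (\<forall>Fs. (\<forall>i. Fs i \<in> M) \<and>
           (\<forall>i. \<forall>a\<in>lev_le T le i. Fs i a = Fs (Suc i) a) \<longrightarrow>
           (\<exists>Finf\<in>M. \<forall>i. \<forall>a\<in>lev_le T le i. Finf a = Fs i a)) \<and>
     \<comment> \<open>(M2)\<close>
     (\<forall>n. \<forall>F\<in>M. ftilde T le F n > 0 \<and> skips T le F (ftilde T le F n - 1) \<longrightarrow>
        (\<exists>F1\<in>M. \<exists>F2\<in>M. skips_only T le F2 (ftilde T le F n - 1) \<and>
           (\<forall>a\<in>lev_le T le n. F2 (F1 a) = F a))) \<and>
     \<comment> \<open>(M3)\<close>
     (\<forall>n m. n < m \<longrightarrow>
        (\<exists>F\<in>M. skips_only T le F m \<and>
           (\<forall>a\<in>lev T le n. \<forall>b\<in>lev T le m. \<forall>p c b'.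
              S a p c = Some b' \<and> le b' b \<longrightarrow> S b p c = Some (F b))))"

(* \<A>\<M> = {F \<restriction> T(<k) : F \<in> M, k > 0}; an element is recorded together with its domain *)
definition AM :: "'a set \<Rightarrow> ('a \<Rightarrow> 'a \<Rightarrow> bool) \<Rightarrow> ('a \<Rightarrow> 'a) set \<Rightarrow> (('a \<Rightarrow> 'a) \<times> 'a set) set" where
  "AM T le M = {(restrict F (lev_lt T le k), lev_lt T le k) | F k. F \<in> M \<and> k > 0}"

end

theory Submission
  imports Defs
begin


lemma NL1:
  fixes h :: "nat \<Rightarrow> nat"
  assumes sm: "strict_mono h" and r: "range h = UNIV - {L}"
  shows "j < L \<Longrightarrow> h j = j"
proof (induction j rule: less_induct)
  case (less j)
  have "j \<in> range h" using r less.prems by auto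
  then obtain x where x: "h x = j" by auto
  have "x \<le> j" using strict_mono_imp_increasing[OF sm, of x] x by simp
  moreover have "x \<noteq> j \<Longrightarrow> False"
  proof -
    assume "x \<noteq> j" then have "x < j" using \<open>x \<le> j\<close> by simp
    then have "h x = x" using less by simp
    then show False using x \<open>x < j\<close> by simp
  qed
  ultimately have "x = j" by blast
  then show ?case using x by simp
qed

lemma NL2:
  fixes h :: "nat \<Rightarrow> nat"
  assumes sm: "strict_mono h" and r: "range h = UNIV - {L}" and hx: "h x = Suc L"
  shows "x = L"
proof -
  have "h L \<noteq> L" using r by auto
  moreover have "L \<le> h L" using strict_mono_imp_increasing[OF sm] .
  ultimately have hL: "h L \<ge> Suc L" by simp
  have "x \<le> Suc L" using strict_mono_imp_increasing[OF sm, of x] hx by simp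
  moreover have "x \<noteq> Suc L" proof
    assume "x = Suc L" then have "h L < h x" using sm by (simp add: strict_mono_def)
    then show False using hL hx by simp
  qed
  moreover have "\<not> x < L" proof
    assume "x < L" then have "h x = x" using NL1[OF sm r] by simp
    then show False using hx \<open>x < L\<close> by simp
  qed
  ultimately show ?thesis by simp
qed

lemma NL3:
  fixes h :: "nat \<Rightarrow> nat"
  assumes sm: "strict_mono h" and r: "{m..} \<subseteq> range h" and hn: "h n = m"
  shows "h (n + i) = m + i"
proof (induction i)
  case 0 then show ?case using hn by simp
next
  case (Suc i)
  have lt: "h (n+i) < h (n + Suc i)" using sm by (simp add: strict_mono_def)
  have "m + Suc i \<in> range h" using r by auto
  then obtain j where j: "h j = m + Suc i" by auto
  have "n + i < j" using j Suc.IH sm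
    by (metis add_Suc_right lessI not_less_eq strict_mono_less)
  then have "n + Suc i \<le> j" by simp
  then have "h (n + Suc i) \<le> h j" using sm by (simp add: strict_mono_less_eq)
  then show ?case using lt Suc.IH j by simp
qed



locale smt_ctx =
  fixes T :: "'a set" and le :: "'a \<Rightarrow> 'a \<Rightarrow> bool" and Sig :: "'c set"
    and S :: "'a \<Rightarrow> 'a list \<Rightarrow> 'c \<Rightarrow> 'a option" and M :: "('a \<Rightarrow> 'a) set"
  assumes SM: "SM_tree T le Sig S M"
begin

lemma ST: "S_tree T le Sig S" using SM unfolding SM_tree_def by blast
lemma tree: "is_tree T le" using ST unfolding S_tree_def by blast

lemma refl: "a \<in> T \<Longrightarrow> le a a" using tree unfolding is_tree_def by blast
lemma antisym: "a \<in> T \<Longrightarrow> b \<in> T \<Longrightarrow> le a b \<Longrightarrow> le b a \<Longrightarrow> a = b"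
  using tree unfolding is_tree_def by blast
lemma trans: "a \<in> T \<Longrightarrow> b \<in> T \<Longrightarrow> c \<in> T \<Longrightarrow> le a b \<Longrightarrow> le b c \<Longrightarrow> le a c"
  using tree unfolding is_tree_def by blast
lemma fin_pred: "a \<in> T \<Longrightarrow> finite {b\<in>T. strict le b a}"
  using tree unfolding is_tree_def by blast
lemma lin: "a \<in> T \<Longrightarrow> b \<in> T \<Longrightarrow> c \<in> T \<Longrightarrow> strict le b a \<Longrightarrow> strict le c a \<Longrightarrow> le b c \<or> le c b"
  using tree unfolding is_tree_def by blast

lemma S_dom: "S a p c = Some b \<Longrightarrow> a \<in> T \<and> set p \<subseteq> T \<and> c \<in> Sig"
  using ST unfolding S_tree_def by blast
lemma S1: "S a p c = Some b \<Longrightarrow> imm_succ T le a b \<and> (\<forall>x\<in>set p. int (level T le x) \<le> int (level T le a) - 1)"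
  using ST unfolding S_tree_def by blast
lemma S2: "S a p c = Some b \<Longrightarrow> S a' q d = Some b \<Longrightarrow> a = a' \<and> p = q \<and> c = d"
  using ST unfolding S_tree_def by blast
lemma S3: "a \<in> T \<Longrightarrow> imm_succ T le a b \<Longrightarrow> \<exists>p c. S a p c = Some b"
  using ST unfolding S_tree_def by blast

lemma strict_level: assumes "a \<in> T" "c \<in> T" "strict le a c"
  shows "level T le a < level T le c"
proof -
  have sub: "{x\<in>T. strict le x a} \<subset> {x\<in>T. strict le x c}"
  proof
    show "{x\<in>T. strict le x a} \<subseteq> {x\<in>T. strict le x c}"
    proof
      fix x assume "x \<in> {x\<in>T. strict le x a}"
      then have x: "x \<in> T" "le x a" "x \<noteq> a" unfolding strict_def by auto
      have "le x c" using trans[OF x(1) assms(1,2) x(2)] assms(3) unfolding strict_def by blast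
      moreover have "x \<noteq> c" proof
        assume "x = c" then have "a = c" using antisym[OF assms(1,2)] x(2) assms(3) unfolding strict_def by blast
        then show False using assms(3) unfolding strict_def by blast
      qed
      ultimately show "x \<in> {x\<in>T. strict le x c}" using x unfolding strict_def by auto
    qed
    show "{x\<in>T. strict le x a} \<noteq> {x\<in>T. strict le x c}"
      using assms unfolding strict_def by blast
  qed
  show ?thesis unfolding level_def using psubset_card_mono[OF fin_pred[OF assms(2)] sub] .
qed

lemma le_level: assumes "a \<in> T" "c \<in> T" "le a c"
  shows "level T le a \<le> level T le c" "level T le a = level T le c \<Longrightarrow> a = c"
  using strict_level[OF assms(1,2)] assms(3) unfolding strict_def by force+

lemma imm_level: assumes "imm_succ T le a b" shows "level T le b = Suc (level T le a)"
proof -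
  have a: "a \<in> T" "b \<in> T" "strict le a b" "\<not> (\<exists>c\<in>T. strict le a c \<and> strict le c b)"
    using assms unfolding imm_succ_def by auto
  have eq: "{x\<in>T. strict le x b} = insert a {x\<in>T. strict le x a}"
  proof
    show "{x\<in>T. strict le x b} \<subseteq> insert a {x\<in>T. strict le x a}"
    proof
      fix x assume "x \<in> {x\<in>T. strict le x b}"
      then have x: "x \<in> T" "strict le x b" by auto
      have "le x a \<or> le a x" using lin[OF a(2) x(1) a(1) x(2) a(3)] .
      then show "x \<in> insert a {x\<in>T. strict le x a}"
        using a(4) x unfolding strict_def by auto
    qed
    show "insert a {x\<in>T. strict le x a} \<subseteq> {x\<in>T. strict le x b}"
    proof
      fix x assume "x \<in> insert a {x\<in>T. strict le x a}"
      then consider "x = a" | "x \<in> T" "strict le x a" by auto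
      then show "x \<in> {x\<in>T. strict le x b}"
      proof cases
        case 1 then show ?thesis using a by auto
      next
        case 2
        have "le x b" using trans[OF 2(1) a(1) a(2)] 2(2) a(3) unfolding strict_def by blast
        moreover have "x \<noteq> b" proof
          assume "x = b" then have "a = b" using antisym[OF a(1,2)] 2(2) a(3) unfolding strict_def by blast
          then show False using a(3) unfolding strict_def by blast
        qed
        ultimately show ?thesis using 2 unfolding strict_def by auto
      qed
    qed
  qed
  have "a \<notin> {x\<in>T. strict le x a}" unfolding strict_def by auto
  then show ?thesis unfolding level_def eq using fin_pred[OF a(1)] by simp
qed

lemma pred_exists: assumes "b \<in> T" "level T le b = Suc j"
  shows "\<exists>a. imm_succ T le a b \<and> level T le a = j"
proof -
  define P where "P = {x\<in>T. strict le x b}"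
  have fP: "finite P" unfolding P_def using fin_pred[OF assms(1)] .
  have "card P = Suc j" using assms(2) unfolding P_def level_def .
  then have ne: "P \<noteq> {}" by auto
  define m where "m = Max (level T le ` P)"
  have "m \<in> level T le ` P" unfolding m_def using fP ne by (intro Max_in) auto
  then obtain a where aP: "a \<in> P" and am: "level T le a = m" by auto
  have mx: "\<And>x. x \<in> P \<Longrightarrow> level T le x \<le> m" unfolding m_def using fP by auto
  have "imm_succ T le a b"
    unfolding imm_succ_def
  proof (intro conjI)
    show "a \<in> T" "b \<in> T" "strict le a b" using aP assms(1) unfolding P_def by auto
    show "\<not> (\<exists>c\<in>T. strict le a c \<and> strict le c b)"
    proof
      assume "\<exists>c\<in>T. strict le a c \<and> strict le c b"
      then obtain c where c: "c \<in> T" "strict le a c" "strict le c b" by blast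
      have "level T le a < level T le c" using strict_level[OF _ c(1) c(2)] aP unfolding P_def by auto
      moreover have "c \<in> P" using c unfolding P_def by auto
      ultimately show False using mx am by fastforce
    qed
  qed
  then show ?thesis using imm_level assms(2) by fastforce
qed

end

context smt_ctx begin

lemma M_ext: "M \<subseteq> extensional T" using SM unfolding SM_tree_def by simp
lemma M_sp: "F \<in> M \<Longrightarrow> shape_preserving T le S F" using SM unfolding SM_tree_def by simp
lemma M_id: "restrict id T \<in> M" using SM unfolding SM_tree_def by simp
lemma M1: "(\<forall>i. Fs i \<in> M) \<Longrightarrow> (\<forall>i. \<forall>a\<in>lev_le T le i. Fs i a = Fs (Suc i) a) \<Longrightarrow>
           (\<exists>Finf\<in>M. \<forall>i. \<forall>a\<in>lev_le T le i. Finf a = Fs i a)"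
  using SM unfolding SM_tree_def by simp
lemma M2: "F \<in> M \<Longrightarrow> ftilde T le F n > 0 \<Longrightarrow> skips T le F (ftilde T le F n - 1) \<Longrightarrow>
        (\<exists>F1\<in>M. \<exists>F2\<in>M. skips_only T le F2 (ftilde T le F n - 1) \<and>
           (\<forall>a\<in>lev_le T le n. F2 (F1 a) = F a))"
  using SM unfolding SM_tree_def by simp
lemma M3: "n < m \<Longrightarrow> (\<exists>F\<in>M. skips_only T le F m \<and>
           (\<forall>a\<in>lev T le n. \<forall>b\<in>lev T le m. \<forall>p c b'.
              S a p c = Some b' \<and> le b' b \<longrightarrow> S b p c = Some (F b)))"
  using SM unfolding SM_tree_def by simp

lemma sp_fun: "F \<in> M \<Longrightarrow> a \<in> T \<Longrightarrow> F a \<in> T"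
  using M_sp unfolding shape_preserving_def by blast
lemma sp_lp: "F \<in> M \<Longrightarrow> a \<in> T \<Longrightarrow> b \<in> T \<Longrightarrow> level T le a = level T le b \<Longrightarrow> level T le (F a) = level T le (F b)"
  using M_sp unfolding shape_preserving_def level_preserving_def by blast
lemma sp_S: "F \<in> M \<Longrightarrow> S a p c = Some b \<Longrightarrow> \<exists>b'. S (F a) (map F p) c = Some b' \<and> le b' (F b)"
  using M_sp unfolding shape_preserving_def by blast
lemma sp_0: "F \<in> M \<Longrightarrow> a \<in> lev T le 0 \<Longrightarrow> b \<in> T \<Longrightarrow> le a b \<Longrightarrow> le a (F b)"
  using M_sp unfolding shape_preserving_def by blast

lemma levels_ne: "\<exists>a\<in>T. level T le a = m"
proof -
  have "\<exists>F\<in>M. skips_only T le F (Suc m)" using M3[of 0 "Suc m"] by (meson zero_less_Suc)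
  then obtain F where F: "F \<in> M" "skips_only T le F (Suc m)" by blast
  have "m \<in> ftilde_range T le F" using F(2) unfolding skips_only_def by auto
  then obtain a where a: "a \<in> T" "m = level T le (F a)" unfolding ftilde_range_def by auto
  show ?thesis using sp_fun[OF F(1) a(1)] a(2) by blast
qed

definition rep :: "nat \<Rightarrow> 'a" where "rep j = (SOME a. a \<in> T \<and> level T le a = j)"

lemma rep: "rep j \<in> T" "level T le (rep j) = j"
  using someI_ex[OF levels_ne[of j, unfolded Bex_def]] unfolding rep_def by auto

lemma ftilde_rep: "ftilde T le F j = level T le (F (rep j))"
  unfolding ftilde_def rep_def ..

lemma ftilde_eq: assumes F: "F \<in> M" and aT: "a \<in> T"
  shows "ftilde T le F (level T le a) = level T le (F a)"
  unfolding ftilde_rep by (rule sp_lp[OF F rep(1) aT rep(2)])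

lemma ftilde_agree: "(\<forall>a\<in>lev_le T le m. F a = G a) \<Longrightarrow> j \<le> m \<Longrightarrow> ftilde T le F j = ftilde T le G j"
  unfolding ftilde_rep using rep unfolding lev_le_def by auto

lemma ftilde_Suc: assumes F: "F \<in> M" shows "ftilde T le F j < ftilde T le F (Suc j)"
proof -
  obtain a where a: "imm_succ T le a (rep (Suc j))" "level T le a = j"
    using pred_exists[OF rep(1) rep(2)] by blast
  have aT: "a \<in> T" using a unfolding imm_succ_def by auto
  obtain p c where pc: "S a p c = Some (rep (Suc j))" using S3[OF aT a(1)] by blast
  obtain b' where b': "S (F a) (map F p) c = Some b'" "le b' (F (rep (Suc j)))" using sp_S[OF F pc] by blast
  have "imm_succ T le (F a) b'" using S1[OF b'(1)] by blast
  then have lb: "level T le b' = Suc (level T le (F a))" and b'T: "b' \<in> T"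
    using imm_level unfolding imm_succ_def by auto
  have "level T le b' \<le> level T le (F (rep (Suc j)))"
    using le_level(1)[OF b'T sp_fun[OF F rep(1)] b'(2)] .
  then show ?thesis using lb ftilde_eq[OF F aT] a(2) ftilde_rep by simp
qed

lemma ftilde_sm: "F \<in> M \<Longrightarrow> strict_mono (ftilde T le F)"
  using ftilde_Suc strict_mono_Suc_iff by blast

lemma ftilde_range_eq: assumes F: "F \<in> M" shows "ftilde_range T le F = range (ftilde T le F)"
proof
  show "ftilde_range T le F \<subseteq> range (ftilde T le F)"
    unfolding ftilde_range_def using ftilde_eq[OF F] by (metis image_subsetI rangeI)
  show "range (ftilde T le F) \<subseteq> ftilde_range T le F"
    unfolding ftilde_range_def ftilde_rep using rep(1) by auto
qed

end

context smt_ctx begin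

lemma canon:
  assumes F: "F \<in> M" and G: "G \<in> M" and agr: "\<forall>a\<in>lev_le T le n. F a = G a"
  shows "(\<forall>i\<le>k. ftilde T le F (n+i) = ftilde T le F n + i) \<Longrightarrow>
         (\<forall>i\<le>k. ftilde T le G (n+i) = ftilde T le G n + i) \<Longrightarrow>
         \<forall>a\<in>lev_le T le (n+k). F a = G a"
proof (induction k)
  case 0 then show ?case using agr by simp
next
  case (Suc k)
  have IH: "\<forall>a\<in>lev_le T le (n+k). F a = G a" using Suc.IH Suc.prems by simp
  have fg: "ftilde T le G n = ftilde T le F n" using ftilde_agree[OF agr, of n] by simp
  show ?case
  proof
    fix b assume b: "b \<in> lev_le T le (n + Suc k)"
    then have bT: "b \<in> T" and lb: "level T le b \<le> n + Suc k" unfolding lev_le_def by auto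
    show "F b = G b"
    proof (cases "level T le b \<le> n+k")
      case True then show ?thesis using IH bT unfolding lev_le_def by auto
    next
      case False
      then have lb': "level T le b = Suc (n+k)" using lb by simp
      obtain a where a: "imm_succ T le a b" "level T le a = n+k" using pred_exists[OF bT lb'] by blast
      have aT: "a \<in> T" using a(1) unfolding imm_succ_def by auto
      obtain p c where pc: "S a p c = Some b" using S3[OF aT a(1)] by blast
      have pT: "set p \<subseteq> T" using S_dom[OF pc] by blast
      have plev: "\<forall>x\<in>set p. level T le x < level T le a" using S1[OF pc] by force
      have mp: "map F p = map G p"
      proof (rule map_ext[rule_format]) 
        fix x assume "x \<in> set p"
        then have "x \<in> lev_le T le (n+k)" using pT plev a(2) unfolding lev_le_def by force
        then show "F x = G x" using IH by blast
      qed
      have Fa: "F a = G a" using IH aT a(2) unfolding lev_le_def by auto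
      obtain b1 where b1: "S (F a) (map F p) c = Some b1" "le b1 (F b)" using sp_S[OF F pc] by blast
      obtain b2 where b2: "S (G a) (map G p) c = Some b2" "le b2 (G b)" using sp_S[OF G pc] by blast
      have b12: "b1 = b2" using b1(1) b2(1) Fa mp by simp
      have "imm_succ T le (F a) b1" using S1[OF b1(1)] by blast
      then have l1: "level T le b1 = Suc (level T le (F a))" and b1T: "b1 \<in> T"
        using imm_level unfolding imm_succ_def by auto
      have "level T le (F a) = ftilde T le F n + k"
        using ftilde_eq[OF F aT] a(2) Suc.prems(1) by simp
      moreover have "level T le (F b) = ftilde T le F n + Suc k"
        using ftilde_eq[OF F bT] lb' Suc.prems(1)[rule_format, of "Suc k"] by simp
      ultimately have "b1 = F b" using le_level(2)[OF b1T sp_fun[OF F bT] b1(2)] l1 by simp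
      moreover have "level T le (G a) = ftilde T le F n + k"
        using ftilde_eq[OF G aT] a(2) Suc.prems(2) fg by simp
      moreover have "level T le (G b) = ftilde T le F n + Suc k"
        using ftilde_eq[OF G bT] lb' Suc.prems(2)[rule_format, of "Suc k"] fg by simp
      ultimately show "F b = G b"
        using le_level(2)[OF b1T sp_fun[OF G bT]] b2(2) b12 l1 Fa by simp
    qed
  qed
qed

lemma id_below:
  assumes F: "F \<in> M" and hj: "\<forall>j<L. ftilde T le F j = j" and L: "0 < L"
  shows "\<forall>a\<in>lev_le T le (L-1). F a = a"
proof -
  define I where "I = restrict id T"
  have I: "I \<in> M" unfolding I_def by (rule M_id)
  have ftI: "ftilde T le I j = j" for j unfolding ftilde_rep I_def using rep by simp
  have agr: "\<forall>a\<in>lev_le T le 0. F a = I a"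
  proof
    fix a assume "a \<in> lev_le T le 0"
    then have aT: "a \<in> T" and la: "level T le a = 0" unfolding lev_le_def by auto
    have "le a (F a)" using sp_0[OF F _ aT refl[OF aT]] aT la unfolding lev_def by simp
    moreover have "level T le (F a) = 0" using ftilde_eq[OF F aT] la hj L by simp
    ultimately have "a = F a" using le_level(2)[OF aT sp_fun[OF F aT]] la by simp
    then show "F a = I a" unfolding I_def using aT by simp
  qed
  have "\<forall>a\<in>lev_le T le (0 + (L-1)). F a = I a"
    by (rule canon[OF F I agr]) (use hj ftI L in auto)
  then show ?thesis unfolding I_def lev_le_def by auto
qed

end

context smt_ctx begin

lemma R:
  assumes G: "G \<in> M" and n': "0 < n'" and gap: "Suc (ftilde T le G (n'-1)) < ftilde T le G n'"
  shows "\<exists>G1\<in>M. (\<forall>a\<in>lev_le T le (n'-1). G1 a = G a) \<and> ftilde T le G1 n' = ftilde T le G n' - 1"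
proof -
  define L where "L = ftilde T le G n' - 1"
  have smG: "strict_mono (ftilde T le G)" using ftilde_sm[OF G] .
  have L0: "0 < L" using gap unfolding L_def by simp
  have skip: "skips T le G L"
    unfolding skips_def ftilde_range_eq[OF G]
  proof
    assume "L \<in> range (ftilde T le G)"
    then obtain x where x: "ftilde T le G x = L" by auto
    have "x < n'" proof (rule ccontr)
      assume "\<not> x < n'" then have "ftilde T le G n' \<le> ftilde T le G x" using smG by (simp add: strict_mono_less_eq)
      then show False using x gap unfolding L_def by simp
    qed
    moreover have "\<not> x \<le> n' - 1" proof
      assume "x \<le> n' - 1" then have "ftilde T le G x \<le> ftilde T le G (n'-1)" using smG by (simp add: strict_mono_less_eq)
      then show False using x gap unfolding L_def by simp
    qed
    ultimately show False by simp
  qed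
  obtain F1 F2 where F1: "F1 \<in> M" and F2: "F2 \<in> M" and so: "skips_only T le F2 L"
    and comp: "\<forall>a\<in>lev_le T le n'. F2 (F1 a) = G a"
    using M2[OF G, of n'] L0 skip unfolding L_def by auto
  have sm2: "strict_mono (ftilde T le F2)" using ftilde_sm[OF F2] .
  have r2: "range (ftilde T le F2) = UNIV - {L}" using so ftilde_range_eq[OF F2] unfolding skips_only_def by simp
  have idb: "\<forall>a\<in>lev_le T le (L-1). F2 a = a"
    using id_below[OF F2 _ L0] NL1[OF sm2 r2] by blast
  have part1: "\<forall>a\<in>lev_le T le (n'-1). F1 a = G a"
  proof
    fix a assume a: "a \<in> lev_le T le (n'-1)"
    then have aT: "a \<in> T" and la: "level T le a \<le> n' - 1" unfolding lev_le_def by auto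
    have e: "F2 (F1 a) = G a" using comp a unfolding lev_le_def by auto
    have "level T le (G a) \<le> ftilde T le G (n'-1)"
      using ftilde_eq[OF G aT] la smG by (metis strict_mono_less_eq)
    then have lG: "level T le (G a) < L" using gap unfolding L_def by simp
    have F1aT: "F1 a \<in> T" using sp_fun[OF F1 aT] .
    have "level T le (F1 a) \<le> ftilde T le F2 (level T le (F1 a))"
      using strict_mono_imp_increasing[OF sm2] .
    also have "\<dots> = level T le (G a)" using ftilde_eq[OF F2 F1aT] e by simp
    finally have "level T le (F1 a) < L" using lG by simp
    then have "F1 a \<in> lev_le T le (L-1)" using F1aT unfolding lev_le_def by simp
    then show "F1 a = G a" using idb e by metis
  qed
  have "ftilde T le F1 n' = L"
  proof -
    have e: "F2 (F1 (rep n')) = G (rep n')" using comp rep unfolding lev_le_def by simp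
    have F1aT: "F1 (rep n') \<in> T" using sp_fun[OF F1 rep(1)] .
    have "ftilde T le F2 (level T le (F1 (rep n'))) = Suc L"
      using ftilde_eq[OF F2 F1aT] e ftilde_rep[of G n'] gap unfolding L_def by simp
    then have "level T le (F1 (rep n')) = L" using NL2[OF sm2 r2] by blast
    then show ?thesis using ftilde_rep by simp
  qed
  then show ?thesis using F1 part1 unfolding L_def by blast
qed

lemma Rstar:
  assumes n': "0 < n'"
  shows "G \<in> M \<Longrightarrow> d = ftilde T le G n' - Suc (ftilde T le G (n'-1)) \<Longrightarrow>
    \<exists>G1\<in>M. (\<forall>a\<in>lev_le T le (n'-1). G1 a = G a) \<and> ftilde T le G1 n' = Suc (ftilde T le G1 (n'-1))"
proof (induction d arbitrary: G)
  case 0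
  have "ftilde T le G (n'-1) < ftilde T le G n'" using ftilde_Suc[OF 0(1), of "n'-1"] n' by simp
  then have "ftilde T le G n' = Suc (ftilde T le G (n'-1))" using 0(2) by simp
  then show ?case using 0(1) by blast
next
  case (Suc d)
  have gap: "Suc (ftilde T le G (n'-1)) < ftilde T le G n'" using Suc.prems(2) by simp
  obtain G' where G': "G' \<in> M" "\<forall>a\<in>lev_le T le (n'-1). G' a = G a"
    "ftilde T le G' n' = ftilde T le G n' - 1" using R[OF Suc.prems(1) n' gap] by blast
  have "ftilde T le G' (n'-1) = ftilde T le G (n'-1)" using ftilde_agree[OF G'(2)] by simp
  then have "d = ftilde T le G' n' - Suc (ftilde T le G' (n'-1))" using G'(3) Suc.prems(2) by simp
  then obtain G1 where G1: "G1 \<in> M" "\<forall>a\<in>lev_le T le (n'-1). G1 a = G' a"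
     "ftilde T le G1 n' = Suc (ftilde T le G1 (n'-1))" using Suc.IH[OF G'(1)] by blast
  then show ?case using G'(2) by (intro bexI[OF _ G1(1)]) auto
qed

lemma Rstar': "G \<in> M \<Longrightarrow>
    \<exists>G1\<in>M. (\<forall>a\<in>lev_le T le k. G1 a = G a) \<and> ftilde T le G1 (Suc k) = Suc (ftilde T le G1 k)"
  using Rstar[of "Suc k" G] by simp

end


context smt_ctx begin
lemma uniq:
  assumes g: "g \<in> M" and g': "g' \<in> M"
    and ag: "\<forall>a\<in>lev_le T le n. g a = f a" and ag': "\<forall>a\<in>lev_le T le n. g' a = f a"
    and rg: "\<forall>l\<ge>ftilde T le f n. l \<in> ftilde_range T le g"
    and rg': "\<forall>l\<ge>ftilde T le f n. l \<in> ftilde_range T le g'"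
  shows "g = g'"
proof -
  have hg: "ftilde T le h (n+i) = ftilde T le h n + i"
    if h: "h \<in> M" and ah: "\<forall>a\<in>lev_le T le n. h a = f a"
      and rh: "\<forall>l\<ge>ftilde T le f n. l \<in> ftilde_range T le h" for h i
  proof -
    have e: "ftilde T le h n = ftilde T le f n" using ftilde_agree[OF ah, of n] by simp
    have "{ftilde T le h n..} \<subseteq> range (ftilde T le h)" using rh e ftilde_range_eq[OF h] by auto
    then show ?thesis using NL3[OF ftilde_sm[OF h]] by blast
  qed
  have agr: "\<forall>a\<in>lev_le T le n. g a = g' a" using ag ag' by simp
  show ?thesis
  proof (rule extensionalityI)
    show "g \<in> extensional T" "g' \<in> extensional T" using g g' M_ext by auto
    fix x assume xT: "x \<in> T"
    have "\<forall>a\<in>lev_le T le (n + level T le x). g a = g' a"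
      by (rule canon[OF g g' agr]) (use hg[OF g ag rg] hg[OF g' ag' rg'] in auto)
    then show "g x = g' x" using xT unfolding lev_le_def by auto
  qed
qed
end

theorem mainTheorem5:
  fixes T :: "'a set" and le :: "'a \<Rightarrow> 'a \<Rightarrow> bool" and Sig :: "'c set"
    and S :: "'a \<Rightarrow> 'a list \<Rightarrow> 'c \<Rightarrow> 'a option" and M :: "('a \<Rightarrow> 'a) set"
    and n :: nat and f :: "'a \<Rightarrow> 'a"
  assumes "SM_tree T le Sig S M"
    and "(f, lev_le T le n) \<in> AM T le M"
  shows "\<exists>!g. g \<in> M \<and> (\<forall>a\<in>lev_le T le n. g a = f a) \<and>
               (\<forall>l\<ge>ftilde T le f n. l \<in> ftilde_range T le g)"
proof -
  interpret smt_ctx T le Sig S M by unfold_locales (rule assms(1))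
  obtain F k where F: "F \<in> M" and feq: "f = restrict F (lev_lt T le k)"
    and dom: "lev_le T le n = lev_lt T le k"
    using assms(2) unfolding AM_def by blast
  have fF: "\<forall>a\<in>lev_le T le n. f a = F a" using feq dom by simp
  define nx where "nx = (\<lambda>k G. SOME G1. G1 \<in> M \<and> (\<forall>a\<in>lev_le T le (n+k). G1 a = G a) \<and>
      ftilde T le G1 (Suc (n+k)) = Suc (ftilde T le G1 (n+k)))"
  have step: "nx k G \<in> M \<and> (\<forall>a\<in>lev_le T le (n+k). nx k G a = G a) \<and>
      ftilde T le (nx k G) (Suc (n+k)) = Suc (ftilde T le (nx k G) (n+k))" if G: "G \<in> M" for k G
  proof -
    have ex: "\<exists>G1. G1 \<in> M \<and> (\<forall>a\<in>lev_le T le (n+k). G1 a = G a) \<and>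
      ftilde T le G1 (Suc (n+k)) = Suc (ftilde T le G1 (n+k))" using Rstar'[OF G, of "n+k"] by blast
    show ?thesis unfolding nx_def by (rule someI_ex[OF ex])
  qed
  define H where "H = rec_nat F nx"
  have HM: "H j \<in> M" for j by (induction j) (simp_all add: H_def F step)
  have Hs: "\<forall>a\<in>lev_le T le (n+j). H (Suc j) a = H j a" for j
    using step[OF HM[of j]] by (simp add: H_def)
  have Hf: "ftilde T le (H (Suc j)) (Suc (n+j)) = Suc (ftilde T le (H (Suc j)) (n+j))" for j
    using step[OF HM[of j]] by (simp add: H_def)
  have H0: "\<forall>a\<in>lev_le T le n. H j a = F a" for j
  proof (induction j)
    case 0 then show ?case by (simp add: H_def)
  next
    case (Suc j) then show ?case using Hs[of j] unfolding lev_le_def by auto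
  qed
  define Fs where "Fs = (\<lambda>i. H (i - n))"
  have c1: "\<forall>i. Fs i \<in> M" unfolding Fs_def using HM by simp
  have c2: "\<forall>i. \<forall>a\<in>lev_le T le i. Fs i a = Fs (Suc i) a"
  proof (intro allI ballI)
    fix i a assume a: "a \<in> lev_le T le i"
    show "Fs i a = Fs (Suc i) a"
    proof (cases "i < n")
      case True then have "i - n = 0" "Suc i - n = 0" by auto
      then show ?thesis unfolding Fs_def by simp
    next
      case False then have "Suc i - n = Suc (i - n)" "n + (i - n) = i" by auto
      then show ?thesis unfolding Fs_def using Hs[of "i-n"] a by simp
    qed
  qed
  obtain Finf where Finf: "Finf \<in> M" and lim: "\<forall>i. \<forall>a\<in>lev_le T le i. Finf a = Fs i a"
    using M1[OF c1 c2] by blast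
  have Ff: "\<forall>a\<in>lev_le T le n. Finf a = f a"
    using spec[OF lim, of n] H0[of 0] fF unfolding Fs_def by simp
  have fti: "ftilde T le Finf (n+j) = ftilde T le Finf n + j" for j
  proof (induction j)
    case 0 then show ?case by simp
  next
    case (Suc j)
    have l: "\<forall>a\<in>lev_le T le (Suc (n+j)). Finf a = H (Suc j) a"
      using spec[OF lim, of "Suc (n+j)"] unfolding Fs_def by (simp add: Suc_diff_le)
    have "ftilde T le Finf (Suc (n+j)) = ftilde T le (H (Suc j)) (Suc (n+j))"
      using ftilde_agree[OF l] by simp
    also have "\<dots> = Suc (ftilde T le (H (Suc j)) (n+j))" using Hf .
    also have "\<dots> = Suc (ftilde T le Finf (n+j))" using ftilde_agree[OF l, of "n+j"] by simp
    finally show ?case using Suc.IH by simp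
  qed
  have en: "ftilde T le Finf n = ftilde T le f n" using ftilde_agree[OF Ff, of n] by simp
  have P: "Finf \<in> M \<and> (\<forall>a\<in>lev_le T le n. Finf a = f a) \<and>
               (\<forall>l\<ge>ftilde T le f n. l \<in> ftilde_range T le Finf)"
  proof (intro conjI Finf Ff allI impI)
    fix l assume "ftilde T le f n \<le> l"
    then have "l = ftilde T le Finf (n + (l - ftilde T le f n))" using fti[of "l - ftilde T le f n"] en by linarith
    then show "l \<in> ftilde_range T le Finf" using ftilde_range_eq[OF Finf] by simp
  qed
  show ?thesis
  proof (rule ex1I[of _ Finf])
    show "Finf \<in> M \<and> (\<forall>a\<in>lev_le T le n. Finf a = f a) \<and>
               (\<forall>l\<ge>ftilde T le f n. l \<in> ftilde_range T le Finf)" using P .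
    fix g assume "g \<in> M \<and> (\<forall>a\<in>lev_le T le n. g a = f a) \<and>
               (\<forall>l\<ge>ftilde T le f n. l \<in> ftilde_range T le g)"
    then show "g = Finf" using uniq P by blast
  qed
qed


end
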